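(* The Petersen graph $P$ satisfies $\alpha_{\mathrm{od}}(P)=3$ and $\chi_{\mathrm{so}}(P)=6$. Moreover, every odd independent set of $P$ with at least two vertices equals the neighborhood $N(v)$ of some vertex $v$.
   Context: An odd independent set in $G=(V,E)$ is an independent set $S$ such that every $v\in V\setminus S$ has either no neighbor or an odd number of neighbors in $S$; $\alpha_{\mathrm{od}}(G)$ is its maximum size. A strong odd coloring is a proper coloring such that for each vertex $v$ every color on $N(v)$ occurs an odd number of times on $N(v)$; $\chi_{\mathrm{so}}(G)$ is the minimum number of colors. $N(v)$ is the open neighborhood. *)

theory Defs
  imports Main
begin

(* A simple graph is given by a vertex set V and a symmetric irreflexive
   adjacency relation E (only its restriction to V matters). *)

definition nbhd :: "'a set \<Rightarrow> ('a \<Rightarrow> 'a \<Rightarrow> bool) \<Rightarrow> 'a \<Rightarrow> 'a set" where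
  "nbhd V E v = {u \<in> V. E v u}"

definition independent_set :: "'a set \<Rightarrow> ('a \<Rightarrow> 'a \<Rightarrow> bool) \<Rightarrow> 'a set \<Rightarrow> bool" where
  "independent_set V E S \<longleftrightarrow> S \<subseteq> V \<and> (\<forall>u\<in>S. \<forall>v\<in>S. \<not> E u v)"

definition odd_independent_set :: "'a set \<Rightarrow> ('a \<Rightarrow> 'a \<Rightarrow> bool) \<Rightarrow> 'a set \<Rightarrow> bool" where
  "odd_independent_set V E S \<longleftrightarrow> independent_set V E S \<and>
     (\<forall>v \<in> V - S. card (nbhd V E v \<inter> S) = 0 \<or> odd (card (nbhd V E v \<inter> S)))"

definition alpha_od :: "'a set \<Rightarrow> ('a \<Rightarrow> 'a \<Rightarrow> bool) \<Rightarrow> nat" where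
  "alpha_od V E = Max (card ` {S. odd_independent_set V E S})"

definition proper_coloring :: "'a set \<Rightarrow> ('a \<Rightarrow> 'a \<Rightarrow> bool) \<Rightarrow> ('a \<Rightarrow> 'c) \<Rightarrow> 'c set \<Rightarrow> bool" where
  "proper_coloring V E f C \<longleftrightarrow> f ` V \<subseteq> C \<and> (\<forall>u\<in>V. \<forall>v\<in>V. E u v \<longrightarrow> f u \<noteq> f v)"

definition strong_odd_coloring :: "'a set \<Rightarrow> ('a \<Rightarrow> 'a \<Rightarrow> bool) \<Rightarrow> ('a \<Rightarrow> 'c) \<Rightarrow> 'c set \<Rightarrow> bool" where
  "strong_odd_coloring V E f C \<longleftrightarrow> proper_coloring V E f C \<and>
     (\<forall>v\<in>V. \<forall>c \<in> f ` nbhd V E v. odd (card {u \<in> nbhd V E v. f u = c}))"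

definition chi_so :: "'a set \<Rightarrow> ('a \<Rightarrow> 'a \<Rightarrow> bool) \<Rightarrow> nat" where
  "chi_so V E = (LEAST k. \<exists>f :: 'a \<Rightarrow> nat. strong_odd_coloring V E f {0..<k})"

(* Petersen graph: outer 5-cycle 0..4, inner pentagram 5..9, spokes i -- i+5 *)
definition petersen_V :: "nat set" where
  "petersen_V = {0..<10}"

definition petersen_edge0 :: "nat \<Rightarrow> nat \<Rightarrow> bool" where
  "petersen_edge0 u v \<longleftrightarrow>
     (u < 5 \<and> v < 5 \<and> v = (u + 1) mod 5) \<or>
     (5 \<le> u \<and> u < 10 \<and> 5 \<le> v \<and> v < 10 \<and> v - 5 = (u - 5 + 2) mod 5) \<or>
     (u < 5 \<and> v = u + 5)"

definition petersen_E :: "nat \<Rightarrow> nat \<Rightarrow> bool" where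
  "petersen_E u v \<longleftrightarrow> petersen_edge0 u v \<or> petersen_edge0 v u"

end

theory Submission imports Defs begin
abbreviation "PV \<equiv> petersen_V"
abbreviation "PE \<equiv> petersen_E"
abbreviation "PN \<equiv> nbhd petersen_V petersen_E"

definition nbl :: "nat \<Rightarrow> nat list" where
  "nbl v = [[1,4,5],[0,2,6],[1,3,7],[2,4,8],[0,3,9],[0,7,8],[1,8,9],[2,5,9],[3,5,6],[4,6,7]] ! v"

lemma PN_expl_all: "\<forall>v\<in>set [0..<10]. PN v = set (nbl v) \<and> distinct (nbl v)"
  by code_simp

fun ind :: "nat list \<Rightarrow> nat list \<Rightarrow> nat list list" where
  "ind acc [] = [acc]"
| "ind acc (v#vs) = (if list_all (\<lambda>u. u \<notin> set (nbl v)) acc then ind (v#acc) vs else []) @ ind acc vs"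

lemma ind_complete:
  assumes "T \<subseteq> set vs" "\<forall>u\<in>T \<union> set acc. \<forall>w\<in>T \<union> set acc. w \<notin> set (nbl u)"
  shows "\<exists>ys\<in>set (ind acc vs). set ys = T \<union> set acc"
  using assms
proof (induction vs arbitrary: acc T)
  case Nil thus ?case by auto
next
  case (Cons v vs)
  show ?case
  proof (cases "v \<in> T")
    case True
    have c: "list_all (\<lambda>u. u \<notin> set (nbl v)) acc"
      using Cons.prems(2) True by (auto simp: list_all_iff)
    have "\<exists>ys\<in>set (ind (v#acc) vs). set ys = (T - {v}) \<union> set (v#acc)"
      apply (rule Cons.IH) using Cons.prems True by auto
    moreover have "(T - {v}) \<union> set (v#acc) = T \<union> set acc" using True by auto
    ultimately show ?thesis using c by auto
  next
    case False
    have "\<exists>ys\<in>set (ind acc vs). set ys = T \<union> set acc"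
      apply (rule Cons.IH) using Cons.prems False by auto
    thus ?thesis by auto
  qed
qed

definition ois_l :: "nat list \<Rightarrow> bool" where
  "ois_l xs \<longleftrightarrow>
     list_all (\<lambda>v. v \<in> set xs \<or> length (filter (\<lambda>u. u \<in> set xs) (nbl v)) \<in> {0,1,3}) [0..<10]"

lemma classif_l: "\<forall>xs\<in>set (ind [] [0..<10]). ois_l xs \<longrightarrow> card (set xs) \<le> 1 \<or> (\<exists>v\<in>set [0..<10]. set xs = set (nbl v))"
  by code_simp

lemma no_three: "\<forall>a\<in>set [0..<10]. \<forall>b\<in>set [0..<10]. \<forall>c\<in>set [0..<10].
   set (nbl a) \<inter> set (nbl b) = {} \<longrightarrow> set (nbl a) \<inter> set (nbl c) = {} \<longrightarrow> set (nbl b) \<inter> set (nbl c) = {} \<longrightarrow> False"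
  by code_simp

lemma nbl_len: "\<forall>v\<in>set [0..<10]. length (nbl v) = 3"
  by code_simp

lemma ois_145: "odd_independent_set PV PE {1,4,5}"
  by code_simp

definition col6 :: "nat \<Rightarrow> nat" where
  "col6 v = [1,0,1,2,0,0,1,3,4,5] ! v"

lemma col6_ok: "strong_odd_coloring PV PE col6 {0..<6}"
  by code_simp

lemma PV_eq: "PV = set [0..<10]"
  by (simp add: petersen_V_def)

lemma PN_sub: "PN v \<subseteq> PV"
  by (auto simp: nbhd_def)

lemma PN_expl: "v \<in> PV \<Longrightarrow> PN v = set (nbl v)"
  and nbl_dist: "v \<in> PV \<Longrightarrow> distinct (nbl v)"
  and nbl_len3: "v \<in> PV \<Longrightarrow> length (nbl v) = 3"
  using PN_expl_all nbl_len PV_eq by auto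

lemma nb_card: "v \<in> PV \<Longrightarrow> card (PN v) = 3"
  using PN_expl nbl_dist nbl_len3 by (simp add: distinct_card)

lemma classif:
  assumes "odd_independent_set PV PE S"
  shows "card S \<le> 1 \<or> (\<exists>v\<in>PV. S = PN v)"
proof -
  have SV: "S \<subseteq> PV" and ind: "\<forall>u\<in>S. \<forall>w\<in>S. \<not> PE u w"
    and od: "\<forall>v \<in> PV - S. card (PN v \<inter> S) = 0 \<or> odd (card (PN v \<inter> S))"
    using assms by (auto simp: odd_independent_set_def independent_set_def)
  have h: "\<forall>u\<in>S \<union> set []. \<forall>w\<in>S \<union> set []. w \<notin> set (nbl u)"
  proof (intro ballI)
    fix u w assume "u \<in> S \<union> set []" "w \<in> S \<union> set []"
    hence "u \<in> S" "w \<in> S" by auto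
    thus "w \<notin> set (nbl u)" using SV ind PN_expl[of u] by (auto simp: nbhd_def)
  qed
  obtain ys where ys: "ys \<in> set (ind [] [0..<10])" "set ys = S"
    using ind_complete[OF _ h, of "[0..<10]"] SV PV_eq by auto
  have "ois_l ys" unfolding ois_l_def list_all_iff
  proof (intro ballI)
    fix v assume v: "v \<in> set [0..<10]"
    show "v \<in> set ys \<or> length (filter (\<lambda>u. u \<in> set ys) (nbl v)) \<in> {0, 1, 3}"
    proof (cases "v \<in> S")
      case True thus ?thesis using ys by auto
    next
      case False
      have vV: "v \<in> PV" using v PV_eq by auto
      have e: "PN v \<inter> S = set (filter (\<lambda>u. u \<in> set ys) (nbl v))"
        using PN_expl[OF vV] ys by auto
      have l: "card (PN v \<inter> S) = length (filter (\<lambda>u. u \<in> set ys) (nbl v))"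
        unfolding e by (rule distinct_card) (simp add: nbl_dist[OF vV])
      have "length (filter (\<lambda>u. u \<in> set ys) (nbl v)) \<le> 3"
        using nbl_len3[OF vV] by (metis length_filter_le)
      moreover have "card (PN v \<inter> S) = 0 \<or> odd (card (PN v \<inter> S))" using od vV False by auto
      ultimately have "length (filter (\<lambda>u. u \<in> set ys) (nbl v)) \<in> {0, 1, 3}"
        unfolding l by (auto simp: le_Suc_eq numeral_eq_Suc)
      thus ?thesis by auto
    qed
  qed
  hence "card S \<le> 1 \<or> (\<exists>v\<in>set [0..<10]. S = set (nbl v))"
    using classif_l ys by auto
  thus ?thesis using PN_expl PV_eq by auto
qed

lemma ois_card: "odd_independent_set PV PE S \<Longrightarrow> card S \<le> 3"
  using classif nb_card by fastforce

lemma alpha: "alpha_od PV PE = 3"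
proof -
  have fin: "finite {S. odd_independent_set PV PE S}"
    by (rule finite_subset[of _ "Pow PV"])
       (auto simp: odd_independent_set_def independent_set_def petersen_V_def)
  have "3 \<in> card ` {S. odd_independent_set PV PE S}"
    using ois_145 by (metis (mono_tags, lifting) image_eqI mem_Collect_eq card_3_iff
        numeral_One numeral_eq_iff semiring_norm(84,85,86,87,89) one_eq_numeral_iff)
  thus ?thesis unfolding alpha_od_def
    by (intro Max_eqI) (use fin ois_card in auto)
qed

lemma class_ois:
  assumes "strong_odd_coloring PV PE f C"
  shows "odd_independent_set PV PE {v\<in>PV. f v = c}"
proof -
  have pr: "\<forall>u\<in>PV. \<forall>v\<in>PV. PE u v \<longrightarrow> f u \<noteq> f v"
    and od: "\<forall>v\<in>PV. \<forall>c \<in> f ` PN v. odd (card {u \<in> PN v. f u = c})"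
    using assms by (auto simp: strong_odd_coloring_def proper_coloring_def)
  show ?thesis unfolding odd_independent_set_def independent_set_def
  proof (intro conjI ballI)
    fix u v assume "u \<in> {v\<in>PV. f v = c}" "v \<in> {v\<in>PV. f v = c}"
    hence "u \<in> PV" "v \<in> PV" "f u = f v" by auto
    thus "\<not> PE u v" using pr by blast
  next
    fix v assume v: "v \<in> PV - {v\<in>PV. f v = c}"
    have eq: "PN v \<inter> {v\<in>PV. f v = c} = {u \<in> PN v. f u = c}"
      using PN_sub by auto
    show "card (PN v \<inter> {v\<in>PV. f v = c}) = 0 \<or> odd (card (PN v \<inter> {v\<in>PV. f v = c}))"
    proof (cases "c \<in> f ` PN v")
      case True thus ?thesis using od v eq by auto
    next
      case False hence "{u \<in> PN v. f u = c} = {}" by auto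
      then show ?thesis unfolding eq by (simp only: card.empty) simp
    qed
  qed auto
qed

lemma no5:
  fixes f :: "nat \<Rightarrow> nat"
  assumes "strong_odd_coloring PV PE f {0..<k}" and "k \<le> 5"
  shows False
proof -
  define Cl where "Cl c = {v\<in>PV. f v = c}" for c
  have rng: "f ` PV \<subseteq> {0..<5}" using assms
    by (auto simp: strong_odd_coloring_def proper_coloring_def)
  have U: "PV = (\<Union>c\<in>{..<5}. Cl c)" using rng by (auto simp: Cl_def)
  have finPV: "finite PV" by (simp add: petersen_V_def)
  have "card PV = (\<Sum>c<5. card (Cl c))"
    by (subst U, rule card_UN_disjoint) (use finPV in \<open>auto simp: Cl_def\<close>)
  hence sum10: "card (Cl 0) + card (Cl 1) + card (Cl 2) + card (Cl 3) + card (Cl 4) = 10"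
    by (simp add: petersen_V_def numeral_eq_Suc)
  have cl: "card (Cl c) \<le> 1 \<or> (\<exists>v\<in>PV. Cl c = PN v)" for c
    using classif class_ois[OF assms(1)] Cl_def by auto
  have c3: "card (Cl c) \<le> 1 \<or> card (Cl c) = 3" for c
    using cl[of c] nb_card by auto
  have three: "\<not> (card (Cl i) = 3 \<and> card (Cl j) = 3 \<and> card (Cl l) = 3)"
    if "i \<noteq> j" "i \<noteq> l" "j \<noteq> l" for i j l
  proof
    assume h: "card (Cl i) = 3 \<and> card (Cl j) = 3 \<and> card (Cl l) = 3"
    obtain a where a: "a \<in> PV" "Cl i = PN a" using cl[of i] h by auto
    obtain b where b: "b \<in> PV" "Cl j = PN b" using cl[of j] h by auto
    obtain d where d: "d \<in> PV" "Cl l = PN d" using cl[of l] h by auto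
    have "PN a \<inter> PN b = {}" "PN a \<inter> PN d = {}" "PN b \<inter> PN d = {}"
      using a b d that by (auto simp: Cl_def)
    hence "set (nbl a) \<inter> set (nbl b) = {}" "set (nbl a) \<inter> set (nbl d) = {}" "set (nbl b) \<inter> set (nbl d) = {}"
      using PN_expl a(1) b(1) d(1) by simp_all
    moreover have "a \<in> set [0..<10]" "b \<in> set [0..<10]" "d \<in> set [0..<10]"
      using a(1) b(1) d(1) PV_eq by simp_all
    ultimately show False using no_three by blast
  qed
  have ar: "(a::nat)+b+c+d+e = 10 \<Longrightarrow> a \<le> 1 \<or> a = 3 \<Longrightarrow> b \<le> 1 \<or> b = 3 \<Longrightarrow> c \<le> 1 \<or> c = 3 \<Longrightarrow> d \<le> 1 \<or> d = 3 \<Longrightarrow> e \<le> 1 \<or> e = 3 \<Longrightarrow>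
  \<not>(a=3\<and>b=3\<and>c=3) \<Longrightarrow> \<not>(a=3\<and>b=3\<and>d=3) \<Longrightarrow> \<not>(a=3\<and>b=3\<and>e=3) \<Longrightarrow> \<not>(a=3\<and>c=3\<and>d=3) \<Longrightarrow> \<not>(a=3\<and>c=3\<and>e=3) \<Longrightarrow>
  \<not>(a=3\<and>d=3\<and>e=3) \<Longrightarrow> \<not>(b=3\<and>c=3\<and>d=3) \<Longrightarrow> \<not>(b=3\<and>c=3\<and>e=3) \<Longrightarrow> \<not>(b=3\<and>d=3\<and>e=3) \<Longrightarrow> \<not>(c=3\<and>d=3\<and>e=3) \<Longrightarrow> False"
    for a b c d e by (elim disjE; simp)
  show False
    by (rule ar[OF sum10 c3[of 0] c3[of 1] c3[of 2] c3[of 3] c3[of 4]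
      three[of 0 1 2] three[of 0 1 3] three[of 0 1 4] three[of 0 2 3] three[of 0 2 4]
      three[of 0 3 4] three[of 1 2 3] three[of 1 2 4] three[of 1 3 4] three[of 2 3 4]]) simp_all
qed

lemma chi: "chi_so PV PE = 6"
  unfolding chi_so_def
proof (rule Least_equality)
  show "\<exists>f :: nat \<Rightarrow> nat. strong_odd_coloring PV PE f {0..<6}" using col6_ok by blast
next
  fix k assume "\<exists>f :: nat \<Rightarrow> nat. strong_odd_coloring PV PE f {0..<k}"
  then obtain f :: "nat \<Rightarrow> nat" where "strong_odd_coloring PV PE f {0..<k}" by blast
  thus "6 \<le> k" using no5[of f k] by (cases "k \<le> 5") auto
qed

theorem proposition8:
  shows "alpha_od petersen_V petersen_E = 3
    \<and> chi_so petersen_V petersen_E = 6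
    \<and> (\<forall>S. odd_independent_set petersen_V petersen_E S \<and> card S \<ge> 2
           \<longrightarrow> (\<exists>v\<in>petersen_V. S = nbhd petersen_V petersen_E v))"
  using alpha chi classif by fastforce

end
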